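(* Let $f$ be a noisy process with noise variance $\sigma^2>0$ and assume $V:=\sup_{x\in\mathbb R}\mathbb E[(f^{\mathrm s}(x))^2]<\infty$. Then for every nonempty bounded collection of data sets $\tilde{\mathcal D}\subseteq\mathcal D$, $$1\le\sup_{D\in\tilde{\mathcal D}}\ \sup_{g\in\mathbb R^{\mathbb R}}\pi'_f(D)(g)\le 2\exp\Big(\frac{2\|\tilde{\mathcal D}\|_\infty^2V}{\sigma^2}+\frac{\|\tilde{\mathcal D}\|_\infty^3}{\sigma^2}\Big).$$
   Context: A stochastic process $f$ on $\mathbb R$ is noisy with noise variance $\sigma^2>0$ if $f=f^{\mathrm s}+f^{\mathrm n}$ with $f^{\mathrm s},f^{\mathrm n}$ independent, $f^{\mathrm s}$ (smooth part) having continuous sample paths, and $(f^{\mathrm n}(x_1),\dots,f^{\mathrm n}(x_n))\sim\mathcal N(\mathbf 0,\sigma^2\mathbf I_n)$ for pairwise distinct $x_i$. Data sets: $\mathcal D=\bigcup_{n\ge0}(\mathbb R\times\mathbb R)^n$; a data set $D=((x_i,y_i))_{i=1}^n$ is written $D=(\mathbf x,\mathbf y)$ with $\mathbf x,\mathbf y\in\mathbb R^n$ (the empty data set is allowed). For $D=(\mathbf x,\mathbf y)$ and $g:\mathbb R\to\mathbb R$ define $$\pi'_f(D)(g)=\frac{\mathcal N(\mathbf y\mid g(\mathbf x),\sigma^2\mathbf I)}{\mathbb E_{f^{\mathrm s}}[\mathcal N(\mathbf y\mid f^{\mathrm s}(\mathbf x),\sigma^2\mathbf I)]}$$ (with value $1$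 for $D=\varnothing$), where $g(\mathbf x)=(g(x_1),\dots,g(x_n))$ and $\mathcal N(\cdot\mid\mathbf m,\mathbf K)$ is the Gaussian density; this is the Radon–Nikodym derivative of the posterior of $f^{\mathrm s}$ given the noisy observations $D$ with respect to the prior law of $f^{\mathrm s}$. For $\tilde{\mathcal D}\subseteq\mathcal D$ let $\|\tilde{\mathcal D}\|_\infty=\sup_{(\mathbf x,\mathbf y)\in\tilde{\mathcal D}}\sum_{i=1}^{|\mathbf x|}(|y_i|\vee1)$; $\tilde{\mathcal D}$ is bounded if $\|\tilde{\mathcal D}\|_\infty<\infty$. *)

theory Defs
  imports "HOL-Probability.Probability"
begin

type_synonym dataset = "(real \<times> real) list"

text \<open>Gaussian likelihood N(y | g(x), sigma^2 I) for D = (x,y), written as the product of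
  the one-dimensional normal densities (identity covariance).\<close>
definition gauss_lik :: "real \<Rightarrow> dataset \<Rightarrow> (real \<Rightarrow> real) \<Rightarrow> real" where
  "gauss_lik \<sigma> D g = prod_list (map (\<lambda>(x, y). normal_density y \<sigma> (g x)) D)"

text \<open>pi'_f(D)(g): Radon--Nikodym derivative of the posterior of the smooth part S
  (random function on the probability space M) w.r.t. its prior.\<close>
definition post_rn :: "'a measure \<Rightarrow> ('a \<Rightarrow> real \<Rightarrow> real) \<Rightarrow> real \<Rightarrow> dataset \<Rightarrow> (real \<Rightarrow> real) \<Rightarrow> real" where
  "post_rn M S \<sigma> D g =
     (if D = [] then 1 else gauss_lik \<sigma> D g / (\<integral>\<omega>. gauss_lik \<sigma> D (S \<omega>) \<partial>M))"

definition data_size :: "dataset \<Rightarrow> real" where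
  "data_size D = sum_list (map (\<lambda>(x, y). max \<bar>y\<bar> 1) D)"

definition data_norm :: "dataset set \<Rightarrow> real" where
  "data_norm Dt = Sup (data_size ` Dt)"

definition bounded_data :: "dataset set \<Rightarrow> bool" where
  "bounded_data Dt \<longleftrightarrow> bdd_above (data_size ` Dt)"

definition noisy_process ::
  "'a measure \<Rightarrow> ('a \<Rightarrow> real \<Rightarrow> real) \<Rightarrow> ('a \<Rightarrow> real \<Rightarrow> real) \<Rightarrow> ('a \<Rightarrow> real \<Rightarrow> real) \<Rightarrow> real \<Rightarrow> bool" where
  "noisy_process M f S N \<sigma> \<longleftrightarrow>
     prob_space M \<and> \<sigma> > 0 \<and>
     (\<forall>\<omega>\<in>space M. \<forall>x. f \<omega> x = S \<omega> x + N \<omega> x) \<and>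
     (\<forall>\<omega>\<in>space M. continuous_on UNIV (S \<omega>)) \<and>
     (\<forall>x. (\<lambda>\<omega>. S \<omega> x) \<in> borel_measurable M) \<and>
     (\<forall>x. (\<lambda>\<omega>. N \<omega> x) \<in> borel_measurable M) \<and>
     prob_space.indep_var M (PiM UNIV (\<lambda>_. borel)) S (PiM UNIV (\<lambda>_. borel)) N \<and>
     (\<forall>xs :: real list. distinct xs \<longrightarrow>
        prob_space.indep_vars M (\<lambda>_. borel) (\<lambda>i \<omega>. N \<omega> (xs ! i)) {..<length xs}) \<and>
     (\<forall>x. distributed M lborel (\<lambda>\<omega>. N \<omega> x) (\<lambda>t. ennreal (normal_density 0 \<sigma> t)))"

end

theory Submission imports Defs begin

definition Qd :: "dataset \<Rightarrow> (real \<Rightarrow> real) \<Rightarrow> real" where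
  "Qd D g = sum_list (map (\<lambda>(x,y). (g x - y)\<^sup>2) D)"

definition Y2 :: "dataset \<Rightarrow> real" where
  "Y2 D = sum_list (map (\<lambda>(x,y). y\<^sup>2) D)"

lemma Qd_simps[simp]: "Qd [] g = 0" "Qd ((x,y)#D) g = (g x - y)\<^sup>2 + Qd D g"
  by (simp_all add: Qd_def)

lemma Y2_simps[simp]: "Y2 [] = 0" "Y2 ((x,y)#D) = y\<^sup>2 + Y2 D"
  by (simp_all add: Y2_def)

lemma ds_simps[simp]: "data_size [] = 0" "data_size ((x,y)#D) = max \<bar>y\<bar> 1 + data_size D"
  by (simp_all add: data_size_def)

lemma Qd_nonneg: "0 \<le> Qd D g"
  by (induction D) auto

lemma ds_nonneg: "0 \<le> data_size D"
  by (induction D) (auto simp: max_def)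

lemma ds_len: "real (length D) \<le> data_size D"
  by (induction D) auto

lemma ds_Y2: "Y2 D \<le> (data_size D)\<^sup>2"
proof (induction D)
  case Nil then show ?case by simp
next
  case (Cons p D)
  obtain x y where p: "p = (x,y)" by fastforce
  have a: "y\<^sup>2 \<le> (max \<bar>y\<bar> 1)\<^sup>2"
    by (metis abs_ge_zero abs_le_square_iff abs_of_nonneg le_max_iff_disj le_trans linear max.cobounded1)
  have "0 \<le> max \<bar>y\<bar> 1 * data_size D" using ds_nonneg[of D] by simp
  then show ?case using Cons a p by (simp add: power2_eq_square algebra_simps)
qed

lemma ds_pos: "D \<noteq> [] \<Longrightarrow> 1 \<le> data_size D"
  by (cases D) (auto simp: ds_nonneg add_increasing2)

lemma lik_closed:
  "gauss_lik \<sigma> D g = (1 / sqrt (2 * pi * \<sigma>\<^sup>2)) ^ length D * exp (- Qd D g / (2 * \<sigma>\<^sup>2))"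
proof (induction D)
  case Nil then show ?case by (simp add: gauss_lik_def)
next
  case (Cons p D)
  obtain x y where p: "p = (x,y)" by fastforce
  have "gauss_lik \<sigma> (p#D) g = normal_density y \<sigma> (g x) * gauss_lik \<sigma> D g"
    by (simp add: gauss_lik_def p)
  also have "\<dots> = (1 / sqrt (2 * pi * \<sigma>\<^sup>2)) ^ length (p#D) *
     (exp (-(g x - y)\<^sup>2/ (2 * \<sigma>\<^sup>2)) * exp (- Qd D g / (2 * \<sigma>\<^sup>2)))"
    using Cons by (simp add: normal_density_def)
  also have "exp (-(g x - y)\<^sup>2/ (2 * \<sigma>\<^sup>2)) * exp (- Qd D g / (2 * \<sigma>\<^sup>2))
     = exp (- Qd (p#D) g / (2 * \<sigma>\<^sup>2))"
    by (simp add: p exp_add[symmetric] add_divide_distrib diff_divide_distrib)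
  finally show ?case .
qed

lemma Qd_meas:
  assumes "\<And>x. (\<lambda>\<omega>. S \<omega> x) \<in> borel_measurable M"
  shows "(\<lambda>\<omega>. Qd D (S \<omega>)) \<in> borel_measurable M"
proof (induction D)
  case Nil then show ?case by simp
next
  case (Cons p D)
  obtain x y where p: "p = (x,y)" by fastforce
  show ?case unfolding p Qd_simps using Cons assms[of x] by measurable
qed

lemma Qd_int:
  assumes P: "prob_space M"
    and meas: "\<And>x. (\<lambda>\<omega>. S \<omega> x) \<in> borel_measurable M"
    and sq: "\<And>x. integrable M (\<lambda>\<omega>. (S \<omega> x)\<^sup>2)"
    and V: "\<And>x. (\<integral>\<omega>. (S \<omega> x)\<^sup>2 \<partial>M) \<le> V"
  shows "integrable M (\<lambda>\<omega>. Qd D (S \<omega>)) \<and>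
         (\<integral>\<omega>. Qd D (S \<omega>) \<partial>M) \<le> 2 * real (length D) * V + 2 * Y2 D"
proof (induction D)
  case Nil then show ?case by simp
next
  case (Cons p D)
  obtain x y where p: "p = (x,y)" by fastforce
  interpret prob_space M by (fact P)
  have i2: "integrable M (\<lambda>\<omega>. 2 * (S \<omega> x)\<^sup>2 + 2 * y\<^sup>2)"
    using sq[of x] by auto
  have b: "(S \<omega> x - y)\<^sup>2 \<le> 2 * (S \<omega> x)\<^sup>2 + 2 * y\<^sup>2" for \<omega>
  proof -
    have "0 \<le> (S \<omega> x + y)\<^sup>2" by simp
    then show ?thesis by (simp add: power2_eq_square algebra_simps)
  qed
  have i1: "integrable M (\<lambda>\<omega>. (S \<omega> x - y)\<^sup>2)"
    apply (rule Bochner_Integration.integrable_bound[OF i2])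
    using meas[of x] apply measurable
    using b by (auto intro!: AE_I2 simp: abs_of_nonneg add_nonneg_nonneg)
  have e1: "(\<integral>\<omega>. (S \<omega> x - y)\<^sup>2 \<partial>M) \<le> (\<integral>\<omega>. 2 * (S \<omega> x)\<^sup>2 + 2 * y\<^sup>2 \<partial>M)"
    by (rule integral_mono[OF i1 i2 b])
  also have "\<dots> = 2 * (\<integral>\<omega>. (S \<omega> x)\<^sup>2 \<partial>M) + 2 * y\<^sup>2"
    using sq[of x] by (simp add: integral_add prob_space)
  also have "\<dots> \<le> 2 * V + 2 * y\<^sup>2" using V[of x] by simp
  finally have e: "(\<integral>\<omega>. (S \<omega> x - y)\<^sup>2 \<partial>M) \<le> 2 * V + 2 * y\<^sup>2" .
  have "integrable M (\<lambda>\<omega>. Qd (p#D) (S \<omega>))"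
    unfolding p Qd_simps using i1 Cons by auto
  moreover have "(\<integral>\<omega>. Qd (p#D) (S \<omega>) \<partial>M) = (\<integral>\<omega>. (S \<omega> x - y)\<^sup>2 \<partial>M) + (\<integral>\<omega>. Qd D (S \<omega>) \<partial>M)"
    unfolding p Qd_simps using i1 Cons by (simp add: integral_add)
  ultimately show ?case using Cons e p by (simp add: algebra_simps)
qed

lemma key:
  assumes P: "prob_space M" and sig: "\<sigma> > 0"
    and meas: "\<And>x. (\<lambda>\<omega>. S \<omega> x) \<in> borel_measurable M"
    and sq: "\<And>x. integrable M (\<lambda>\<omega>. (S \<omega> x)\<^sup>2)"
    and V: "\<And>x. (\<integral>\<omega>. (S \<omega> x)\<^sup>2 \<partial>M) \<le> V"
    and ne: "D \<noteq> []"
  shows "(\<forall>g. post_rn M S \<sigma> D g \<le> exp ((real (length D) * V + Y2 D) / \<sigma>\<^sup>2))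
     \<and> 1 \<le> (SUP g. ereal (post_rn M S \<sigma> D g))"
proof -
  interpret prob_space M by (fact P)
  define c where "c = (1 / sqrt (2 * pi * \<sigma>\<^sup>2)) ^ length D"
  define k where "k = 2 * \<sigma>\<^sup>2"
  have kpos: "k > 0" using sig by (simp add: k_def)
  have cpos: "c > 0" using sig by (simp add: c_def)
  have QI: "integrable M (\<lambda>\<omega>. Qd D (S \<omega>))" and QE: "(\<integral>\<omega>. Qd D (S \<omega>) \<partial>M) \<le> 2 * real (length D) * V + 2 * Y2 D"
    using Qd_int[OF P meas sq V] by auto
  define m where "m = (\<integral>\<omega>. Qd D (S \<omega>) \<partial>M) / k"
  have Qm: "(\<lambda>\<omega>. Qd D (S \<omega>)) \<in> borel_measurable M" by (rule Qd_meas[OF meas])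
  have EI: "integrable M (\<lambda>\<omega>. exp (- Qd D (S \<omega>) / k))"
    apply (rule integrable_const_bound[where B=1])
    using Qd_nonneg kpos apply (auto intro!: AE_I2)[1]
    using Qm by measurable
  have LI: "integrable M (\<lambda>\<omega>. exp (-m) * (1 + (- Qd D (S \<omega>) / k + m)))"
    using QI by auto
  have pw: "exp (-m) * (1 + (- Qd D (S \<omega>) / k + m)) \<le> exp (- Qd D (S \<omega>) / k)" for \<omega>
  proof -
    have "exp (-m) * (1 + (- Qd D (S \<omega>) / k + m)) \<le> exp (-m) * exp (- Qd D (S \<omega>) / k + m)"
      by (intro mult_left_mono exp_ge_add_one_self) auto
    also have "\<dots> = exp (- Qd D (S \<omega>) / k)" by (simp add: exp_add[symmetric])
    finally show ?thesis .
  qed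
  have "(\<integral>\<omega>. exp (-m) * (1 + (- Qd D (S \<omega>) / k + m)) \<partial>M) = exp (-m) * (1 + (- (\<integral>\<omega>. Qd D (S \<omega>) \<partial>M) / k + m))"
    using QI by (simp add: integral_add prob_space)
  also have "\<dots> = exp (-m)" by (simp add: m_def)
  finally have "exp (-m) \<le> (\<integral>\<omega>. exp (- Qd D (S \<omega>) / k) \<partial>M)"
    using integral_mono[OF LI EI pw] by simp
  hence J: "exp (-m) \<le> (\<integral>\<omega>. exp (- Qd D (S \<omega>) / k) \<partial>M)" .
  define I where "I = (\<integral>\<omega>. gauss_lik \<sigma> D (S \<omega>) \<partial>M)"
  have Ieq: "I = c * (\<integral>\<omega>. exp (- Qd D (S \<omega>) / k) \<partial>M)"
    unfolding I_def lik_closed c_def k_def by simp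
  have Ipos: "I > 0" using J cpos Ieq
    by (metis exp_gt_zero less_le_trans mult_pos_pos)
  have bnd: "post_rn M S \<sigma> D g \<le> exp m" for g
  proof -
    have "post_rn M S \<sigma> D g = c * exp (- Qd D g / k) / I"
      using ne unfolding post_rn_def I_def lik_closed c_def k_def by simp
    also have "\<dots> \<le> c / I"
      using cpos Ipos Qd_nonneg[of D g] kpos by (simp add: divide_right_mono)
    also have "\<dots> \<le> c / (c * exp (-m))"
      using Ieq J cpos Ipos by (intro divide_left_mono) auto
    also have "\<dots> = exp m" using cpos by (simp add: exp_minus field_simps)
    finally show ?thesis .
  qed
  have "m \<le> (real (length D) * V + Y2 D) / \<sigma>\<^sup>2"
    unfolding m_def k_def using QE sig by (simp add: field_simps)
  hence A: "\<forall>g. post_rn M S \<sigma> D g \<le> exp ((real (length D) * V + Y2 D) / \<sigma>\<^sup>2)"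
    using bnd by (meson exp_le_cancel_iff order_trans)
  have B: "1 \<le> (SUP g. ereal (post_rn M S \<sigma> D g))"
  proof (rule ccontr)
    define s where "s = (SUP g. ereal (post_rn M S \<sigma> D g))"
    assume "\<not> 1 \<le> (SUP g. ereal (post_rn M S \<sigma> D g))"
    hence s1: "s < 1" by (simp add: s_def not_le)
    have up: "ereal (post_rn M S \<sigma> D g) \<le> s" for g unfolding s_def by (rule SUP_upper) auto
    have "0 \<le> post_rn M S \<sigma> D g" for g
      using Ipos ne unfolding post_rn_def I_def[symmetric]
      by (simp add: lik_closed)
    hence s0: "0 \<le> s" using up[of undefined] by (meson ereal_less_eq(5) order_trans)
    obtain r where r: "s = ereal r" using s0 s1 by (cases s) auto
    have r1: "r < 1" using s1 r by simp
    have pt: "gauss_lik \<sigma> D (S \<omega>) \<le> r * I" for \<omega>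
    proof -
      have "gauss_lik \<sigma> D (S \<omega>) / I \<le> r" using up[of "S \<omega>"] ne r by (simp add: post_rn_def I_def)
      thus ?thesis using Ipos by (simp add: divide_le_eq)
    qed
    have GI: "integrable M (\<lambda>\<omega>. gauss_lik \<sigma> D (S \<omega>))"
      unfolding lik_closed using EI by (simp add: k_def)
    have "I \<le> (\<integral>\<omega>. r * I \<partial>M)"
      unfolding I_def using pt unfolding I_def by (intro integral_mono[OF GI]) auto
    hence "I \<le> r * I" by (simp add: prob_space)
    thus False using Ipos r1 by (smt (verit) mult_less_cancel_right2)
  qed
  show ?thesis using A B by blast
qed

theorem mainTheorem8:
  fixes M :: "'a measure" and f S N :: "'a \<Rightarrow> real \<Rightarrow> real" and \<sigma> :: real
    and Dt :: "dataset set"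
  assumes "noisy_process M f S N \<sigma>"
    and "(SUP x. \<integral>\<^sup>+ \<omega>. ennreal ((S \<omega> x)\<^sup>2) \<partial>M) < \<infinity>"
    and "Dt \<noteq> {}" and "bounded_data Dt"
  shows "1 \<le> (SUP D\<in>Dt. SUP g. ereal (post_rn M S \<sigma> D g))
    \<and> (SUP D\<in>Dt. SUP g. ereal (post_rn M S \<sigma> D g))
        \<le> ereal (2 * exp (2 * (data_norm Dt)\<^sup>2 * enn2real (SUP x. \<integral>\<^sup>+ \<omega>. ennreal ((S \<omega> x)\<^sup>2) \<partial>M) / \<sigma>\<^sup>2
                       + (data_norm Dt) ^ 3 / \<sigma>\<^sup>2))"
proof -
  have P: "prob_space M" and sig: "\<sigma> > 0" and meas: "\<And>x. (\<lambda>\<omega>. S \<omega> x) \<in> borel_measurable M"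
    using assms(1) unfolding noisy_process_def by auto
  define W where "W = (SUP x. \<integral>\<^sup>+ \<omega>. ennreal ((S \<omega> x)\<^sup>2) \<partial>M)"
  define V where "V = enn2real W"
  have Wfin: "W < \<infinity>" using assms(2) by (simp add: W_def)
  have V0: "0 \<le> V" by (simp add: V_def)
  have sq: "integrable M (\<lambda>\<omega>. (S \<omega> x)\<^sup>2)" for x
  proof -
    have "(\<integral>\<^sup>+ \<omega>. ennreal ((S \<omega> x)\<^sup>2) \<partial>M) \<le> W" unfolding W_def by (rule SUP_upper) auto
    hence "(\<integral>\<^sup>+ \<omega>. ennreal (norm ((S \<omega> x)\<^sup>2)) \<partial>M) < \<infinity>" using Wfin by simp
    moreover have "(\<lambda>\<omega>. (S \<omega> x)\<^sup>2) \<in> borel_measurable M" using meas[of x] by measurable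
    ultimately show ?thesis unfolding integrable_iff_bounded by blast
  qed
  have Vb: "(\<integral>\<omega>. (S \<omega> x)\<^sup>2 \<partial>M) \<le> V" for x
  proof -
    have le: "(\<integral>\<^sup>+ \<omega>. ennreal ((S \<omega> x)\<^sup>2) \<partial>M) \<le> W" unfolding W_def by (rule SUP_upper) auto
    have "(\<integral>\<omega>. (S \<omega> x)\<^sup>2 \<partial>M) = enn2real (\<integral>\<^sup>+ \<omega>. ennreal ((S \<omega> x)\<^sup>2) \<partial>M)"
      using meas[of x] by (intro integral_eq_nn_integral) auto
    also have "\<dots> \<le> V" unfolding V_def using le Wfin by (intro enn2real_mono) auto
    finally show ?thesis .
  qed
  define B where "B = data_norm Dt"
  have dsB: "D \<in> Dt \<Longrightarrow> data_size D \<le> B" for D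
    unfolding B_def data_norm_def using assms(4) unfolding bounded_data_def
    by (intro cSup_upper) auto
  obtain D0 where D0: "D0 \<in> Dt" using assms(3) by blast
  have B0: "0 \<le> B" using dsB[OF D0] ds_nonneg[of D0] by simp
  define t where "t = 2 * B\<^sup>2 * V / \<sigma>\<^sup>2 + B ^ 3 / \<sigma>\<^sup>2"
  have t0: "0 \<le> t" unfolding t_def using B0 V0 by simp
  have one: "1 \<le> (SUP g. ereal (post_rn M S \<sigma> D g))" if "D \<in> Dt" for D
  proof (cases "D = []")
    case True then show ?thesis by (simp add: post_rn_def)
  next
    case False then show ?thesis using key[of M \<sigma> S V D, OF P sig meas sq Vb False] by blast
  qed
  have up: "post_rn M S \<sigma> D g \<le> 2 * exp t" if "D \<in> Dt" for D g
  proof (cases "D = []")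
    case True
    have "1 \<le> exp t" using t0 by simp
    hence "1 \<le> 2 * exp t" by linarith
    then show ?thesis using True by (simp add: post_rn_def)
  next
    case False
    have s1: "1 \<le> data_size D" by (rule ds_pos[OF False])
    have sB: "data_size D \<le> B" by (rule dsB[OF that])
    have B1: "1 \<le> B" using s1 sB by simp
    have "real (length D) * V \<le> B * V" using ds_len[of D] sB V0 by (intro mult_right_mono) auto
    also have "\<dots> \<le> 2 * B\<^sup>2 * V" using B1 V0 by (intro mult_right_mono) (auto simp: power2_eq_square)
    finally have a: "real (length D) * V \<le> 2 * B\<^sup>2 * V" .
    have "Y2 D \<le> (data_size D)\<^sup>2" by (rule ds_Y2)
    also have "\<dots> \<le> B\<^sup>2" using s1 sB by (intro power_mono) auto
    also have "\<dots> \<le> B ^ 3" using B1 by (simp add: power_increasing)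
    finally have b: "Y2 D \<le> B ^ 3" .
    have "(real (length D) * V + Y2 D) / \<sigma>\<^sup>2 \<le> t"
      unfolding t_def add_divide_distrib[symmetric] using a b sig by (intro divide_right_mono) auto
    hence "exp ((real (length D) * V + Y2 D) / \<sigma>\<^sup>2) \<le> exp t" by simp
    moreover have "exp t \<le> 2 * exp t" by simp
    ultimately show ?thesis using key[of M \<sigma> S V D, OF P sig meas sq Vb False] by (meson order_trans)
  qed
  have L: "1 \<le> (SUP D\<in>Dt. SUP g. ereal (post_rn M S \<sigma> D g))"
    using one[OF D0] D0 by (meson SUP_upper2)
  have U: "(SUP D\<in>Dt. SUP g. ereal (post_rn M S \<sigma> D g)) \<le> ereal (2 * exp t)"
    using up by (intro SUP_least) auto
  show ?thesis using L U unfolding t_def B_def V_def W_def by simp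
qed

end
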